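(* Let $n\ge 3$, let $k$ be an integer with $0\le k\le\frac n3$, and let $t\in\{0,\dots,n-1\}$. There is a function $f$, assigning a real number to every multiset of $n-k$ unlabelled graphs on $n-1$ vertices, such that for every graph $G$ on $n$ vertices and every sub-multiset $\mathcal{C}$ of $\mathcal{D}(G)$ of size $n-k$, $$\tfrac14 d_t(G)-1\le f(\mathcal{C})\le d_{t-1}(G)+d_t(G)+d_{t+1}(G),$$ where $d_{-1}(G)=d_n(G)=0$.
   Context: All graphs are finite, simple and undirected. For a graph $G'$ and integer $t$, $d_t(G')$ is the number of vertices of degree $t$ in $G'$. For $v\in V(G)$, the card $G-v$ is obtained by deleting $v$ and its incident edges; the deck $\mathcal{D}(G)$ is the multiset of the $n$ cards $G-v$, $v\in V(G)$, up to isomorphism. *)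

theory Defs
  imports Complex_Main "HOL-Library.Multiset"
begin

type_synonym graph = "nat set \<times> nat set set"

definition wf_graph :: "graph \<Rightarrow> bool" where
  "wf_graph G \<longleftrightarrow> finite (fst G) \<and> (\<forall>e\<in>snd G. card e = 2 \<and> e \<subseteq> fst G)"

definition graph_iso :: "graph \<Rightarrow> graph \<Rightarrow> bool" where
  "graph_iso G H \<longleftrightarrow> (\<exists>\<phi>. bij_betw \<phi> (fst G) (fst H) \<and> snd H = (\<lambda>e. \<phi> ` e) ` snd G)"

text \<open>Unlabelled graph = isomorphism class.\<close>
definition iso_class :: "graph \<Rightarrow> graph set" where
  "iso_class G = {H. wf_graph H \<and> graph_iso G H}"

definition card_del :: "graph \<Rightarrow> nat \<Rightarrow> graph" where
  "card_del G v = (fst G - {v}, {e \<in> snd G. v \<notin> e})"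

definition deck :: "graph \<Rightarrow> graph set multiset" where
  "deck G = image_mset (\<lambda>v. iso_class (card_del G v)) (mset_set (fst G))"

definition degree :: "graph \<Rightarrow> nat \<Rightarrow> nat" where
  "degree G v = card {e \<in> snd G. v \<in> e}"

text \<open>Number of vertices of degree t (t an integer, so d (-1) = 0).\<close>
definition dcount :: "graph \<Rightarrow> int \<Rightarrow> nat" where
  "dcount G t = card {v \<in> fst G. int (degree G v) = t}"

end

theory Submission
  imports Defs
begin

lemma wf_card_del: "wf_graph G \<Longrightarrow> wf_graph (card_del G v)"
  unfolding wf_graph_def card_del_def by auto

lemma degree_iso:
  assumes wf: "wf_graph H" and bij: "bij_betw \<phi> (fst H) (fst H')"
    and E: "snd H' = (\<lambda>e. \<phi> ` e) ` snd H" and u: "u \<in> fst H"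
  shows "degree H' (\<phi> u) = degree H u"
proof -
  have inj: "inj_on \<phi> (fst H)" using bij by (simp add: bij_betw_def)
  have sub: "\<And>e. e \<in> snd H \<Longrightarrow> e \<subseteq> fst H" using wf by (auto simp: wf_graph_def)
  have injE: "inj_on (\<lambda>e. \<phi> ` e) {e \<in> snd H. u \<in> e}"
    by (intro inj_onI) (metis (no_types, lifting) inj inj_on_image_eq_iff mem_Collect_eq sub)
  have mem: "\<And>e. e \<in> snd H \<Longrightarrow> (\<phi> u \<in> \<phi> ` e) = (u \<in> e)"
    using inj sub u by (meson inj_on_image_mem_iff)
  have "{e \<in> snd H'. \<phi> u \<in> e} = (\<lambda>e. \<phi> ` e) ` {e \<in> snd H. u \<in> e}"
    using E mem by auto
  then show ?thesis unfolding degree_def using card_image[OF injE] by simp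
qed

lemma dcount_iso:
  assumes wf: "wf_graph H" and iso: "graph_iso H H'"
  shows "dcount H' s = dcount H s"
proof -
  obtain \<phi> where bij: "bij_betw \<phi> (fst H) (fst H')" and E: "snd H' = (\<lambda>e. \<phi> ` e) ` snd H"
    using iso by (auto simp: graph_iso_def)
  have inj: "inj_on \<phi> (fst H)" using bij by (simp add: bij_betw_def)
  have im: "fst H' = \<phi> ` fst H" using bij by (simp add: bij_betw_def)
  have "{v \<in> fst H'. int (degree H' v) = s} = \<phi> ` {v \<in> fst H. int (degree H v) = s}"
    using degree_iso[OF wf bij E] im by auto
  moreover have "inj_on \<phi> {v \<in> fst H. int (degree H v) = s}"
    using inj by (rule inj_on_subset) auto
  ultimately show ?thesis unfolding dcount_def by (simp add: card_image)
qed

lemma degree_card_del: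
  assumes wf: "wf_graph G" and u: "u \<in> fst G" and uv: "u \<noteq> v"
  shows "degree (card_del G v) u = degree G u \<or> degree (card_del G v) u + 1 = degree G u"
proof -
  let ?A = "{e \<in> snd G. u \<in> e \<and> v \<notin> e}"
  let ?B = "{e \<in> snd G. u \<in> e \<and> v \<in> e}"
  have fin: "finite (snd G)"
  proof -
    have "snd G \<subseteq> Pow (fst G)" using wf by (auto simp: wf_graph_def)
    moreover have "finite (Pow (fst G))" using wf by (simp add: wf_graph_def)
    ultimately show ?thesis by (rule finite_subset)
  qed
  have B: "?B \<subseteq> {{u,v}}"
  proof
    fix e assume e: "e \<in> ?B"
    then have "card e = 2" using wf by (auto simp: wf_graph_def)
    then obtain a b where "e = {a,b}" "a \<noteq> b" by (meson card_2_iff)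
    then show "e \<in> {{u,v}}" using e uv by auto
  qed
  have cB: "card ?B \<le> 1"
    using card_mono[OF _ B] by simp
  have "{e \<in> snd G. u \<in> e} = ?A \<union> ?B" by auto
  moreover have "?A \<inter> ?B = {}" by auto
  moreover have "finite ?A" "finite ?B" using fin by auto
  ultimately have "degree G u = card ?A + card ?B"
    unfolding degree_def by (simp add: card_Un_disjoint)
  moreover have "degree (card_del G v) u = card ?A"
    unfolding degree_def card_del_def by (auto intro: arg_cong[where f=card])
  ultimately show ?thesis using cB by linarith
qed

lemma card_bounds:
  assumes wf: "wf_graph G" and v: "v \<in> fst G"
  defines "H \<equiv> card_del G v"
  shows "real (dcount G t) / 4 - 1 \<le> (real (dcount H t) + real (dcount H (t-1))) / 2"
    and "(real (dcount H t) + real (dcount H (t-1))) / 2 \<le>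
         real (dcount G (t - 1)) + real (dcount G t) + real (dcount G (t + 1))"
proof -
  have finV: "finite (fst G)" using wf by (simp add: wf_graph_def)
  have fH: "fst H = fst G - {v}" by (simp add: H_def card_del_def)
  have dd: "\<And>u. u \<in> fst H \<Longrightarrow> degree H u = degree G u \<or> degree H u + 1 = degree G u"
    using degree_card_del[OF wf] fH H_def by auto
  define S where "S s = {u \<in> fst H. int (degree H u) = s}" for s
  define T where "T s = {u \<in> fst G. int (degree G u) = s}" for s
  have dH: "dcount H s = card (S s)" for s by (simp add: dcount_def S_def)
  have dG: "dcount G s = card (T s)" for s by (simp add: dcount_def T_def)
  have finS: "finite (S s)" for s using finV by (simp add: S_def fH)
  have finT: "finite (T s)" for s using finV by (simp add: T_def)
  have "T t - {v} \<subseteq> S t \<union> S (t-1)"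
    using dd unfolding S_def T_def fH by fastforce
  then have "card (T t - {v}) \<le> card (S t \<union> S (t-1))"
    using finS by (intro card_mono) auto
  also have "\<dots> \<le> card (S t) + card (S (t-1))" by (rule card_Un_le)
  finally have "card (T t) - 1 \<le> card (S t) + card (S (t-1))"
    by (metis card_Diff_singleton_if diff_le_self le_trans)
  then have "real (card (T t)) - 1 \<le> real (card (S t)) + real (card (S (t-1)))"
    by linarith
  then show "real (dcount G t) / 4 - 1 \<le> (real (dcount H t) + real (dcount H (t-1))) / 2"
    unfolding dH dG using of_nat_0_le_iff[of "card (T t)", where 'a=real] by (simp add: field_simps)
  have "S s \<subseteq> T s \<union> T (s+1)" for s
    using dd unfolding S_def T_def fH by fastforce
  then have "card (S s) \<le> card (T s \<union> T (s+1))" for s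
    using finT by (intro card_mono) auto
  then have up: "card (S s) \<le> card (T s) + card (T (s+1))" for s
    using card_Un_le le_trans by blast
  have "card (S t) + card (S (t-1)) \<le> 2 * (card (T (t-1)) + card (T t) + card (T (t+1)))"
    using up[of t] up[of "t-1"] by simp
  then have "real (card (S t)) + real (card (S (t-1))) \<le> 2 * (real (card (T (t-1))) + real (card (T t)) + real (card (T (t+1))))"
    by (metis of_nat_add of_nat_le_iff of_nat_mult of_nat_numeral)
  then show "(real (dcount H t) + real (dcount H (t-1))) / 2 \<le>
         real (dcount G (t - 1)) + real (dcount G t) + real (dcount G (t + 1))"
    unfolding dH dG by (simp add: field_simps)
qed

theorem lemma5:
  fixes n k :: nat and t :: int
  assumes "n \<ge> 3" and "3 * k \<le> n" and "0 \<le> t" and "t < int n"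
  shows "\<exists>f :: graph set multiset \<Rightarrow> real.
    \<forall>G C. wf_graph G \<and> card (fst G) = n \<and> C \<subseteq># deck G \<and> size C = n - k \<longrightarrow>
      real (dcount G t) / 4 - 1 \<le> f C \<and>
      f C \<le> real (dcount G (t - 1)) + real (dcount G t) + real (dcount G (t + 1))"
proof -
  define g :: "graph set \<Rightarrow> real" where
    "g X = (real (dcount (SOME H. H \<in> X) t) + real (dcount (SOME H. H \<in> X) (t-1))) / 2" for X
  define f :: "graph set multiset \<Rightarrow> real" where
    "f C = sum_mset (image_mset g C) / real (size C)" for C
  have npos: "n - k > 0" using assms by linarith
  show ?thesis
  proof (intro exI allI impI)
    fix G C
    assume a: "wf_graph G \<and> card (fst G) = n \<and> C \<subseteq># deck G \<and> size C = n - k"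
    then have wf: "wf_graph G" and sub: "C \<subseteq># deck G" and sz: "size C = n - k" by auto
    define L where "L = real (dcount G t) / 4 - 1"
    define U where "U = real (dcount G (t - 1)) + real (dcount G t) + real (dcount G (t + 1))"
    have gb: "L \<le> g X \<and> g X \<le> U" if X: "X \<in># C" for X
    proof -
      have "X \<in># deck G" using X sub by (meson mset_subset_eqD)
      then obtain v where v: "v \<in> fst G" and Xv: "X = iso_class (card_del G v)"
        using wf by (auto simp: deck_def wf_graph_def)
      have wfc: "wf_graph (card_del G v)" using wf by (rule wf_card_del)
      have "card_del G v \<in> X" unfolding Xv iso_class_def graph_iso_def
        using wfc by (auto intro!: exI[of _ id])
      then have "(SOME H. H \<in> X) \<in> X" by (rule someI)
      then have iso: "graph_iso (card_del G v) (SOME H. H \<in> X)"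
        unfolding Xv iso_class_def by simp
      have "g X = (real (dcount (card_del G v) t) + real (dcount (card_del G v) (t-1))) / 2"
        unfolding g_def using dcount_iso[OF wfc iso] by simp
      then show ?thesis using card_bounds[OF wf v, of t] unfolding L_def U_def by simp
    qed
    have s1: "sum_mset (image_mset (\<lambda>_. L) C) \<le> sum_mset (image_mset g C)"
      by (rule sum_mset_mono) (use gb in auto)
    have s2: "sum_mset (image_mset g C) \<le> sum_mset (image_mset (\<lambda>_. U) C)"
      by (rule sum_mset_mono) (use gb in auto)
    have sp: "real (size C) > 0" using sz npos by simp
    from s1 s2 have "real (size C) * L \<le> sum_mset (image_mset g C)"
      "sum_mset (image_mset g C) \<le> real (size C) * U" by simp_all
    then have "L \<le> f C \<and> f C \<le> U"
      unfolding f_def using sp by (simp add: field_simps)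
    then show "real (dcount G t) / 4 - 1 \<le> f C \<and>
      f C \<le> real (dcount G (t - 1)) + real (dcount G t) + real (dcount G (t + 1))"
      unfolding L_def U_def by simp
  qed
qed

end
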